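(* Let $\mathfrak{S}=(\mathcal{X},\mathsf{S},\gamma,(\Lambda_{a})_{a\in\mathcal{A}})$ be a spectral decomposition system for the Euclidean space $\mathfrak{H}$, and let $\varphi\colon\mathcal{X}\to\left]-\infty,+\infty\right]$ be $\mathsf{S}$-invariant. Then: (i) $\varphi\circ\gamma$ is convex if and only if $\varphi$ is convex; (ii) if $\varphi$ is proper, then $\varphi\circ\gamma\in\Gamma_0(\mathfrak{H})$ if and only if $\varphi\in\Gamma_0(\mathcal{X})$.
   Context: A Euclidean space is a finite-dimensional real inner product space; inner products are written $\langle\cdot,\cdot\rangle$ and norms $\|\cdot\|$. Let $\mathfrak{H}$ and $\mathcal{X}$ be Euclidean spaces, let $\mathsf{S}$ be a group acting on $\mathcal{X}$ by linear isometries, let $\gamma\colon\mathfrak{H}\to\mathcal{X}$, and let $(\Lambda_a)_{a\in\mathcal{A}}$ be a family of linear operators from $\mathcal{X}$ to $\mathfrak{H}$. The orbit of $x$ is $\mathsf{S}\cdot x=\{s\cdot x: s\in\mathsf{S}\}$; a map $f$ on $\mathcal{X}$ is $\mathsf{S}$-invariant if $f(s\cdot x)=f(x)$ for all $s\in\mathsf{S}$, $x\in\mathcal{X}$. The tuple is a spectral decomposition system for $\mathfrak{H}$ if: [A] every $\Lambda_a$ is an isometry; [B] there exists an $\mathsf{S}$-invariant $\tau\colon\mathcal{X}\to\mathcal{X}$ with $\tau(x)\in\mathsf{S}\cdot x$ for all $x$ and $\gamma\circ\Lambda_a=\tau$ for all $a$; [C] for every $X\in\mathfrak{H}$ there is $a$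 with $X=\Lambda_a\gamma(X)$; [D] $\langle X,Y\rangle\leq\langle\gamma(X),\gamma(Y)\rangle$ for all $X,Y\in\mathfrak{H}$. For a function $f$ on a Euclidean space, $\operatorname{dom}f=\{x: f(x)<+\infty\}$; $f$ is convex if $f(\alpha x+(1-\alpha)y)\leq\alpha f(x)+(1-\alpha)f(y)$ for all $x,y\in\operatorname{dom}f$, $\alpha\in\left]0,1\right[$; $f$ is proper if it never takes $-\infty$ and $\operatorname{dom}f\neq\varnothing$; $\Gamma_0(\mathcal{H})$ is the set of proper lower semicontinuous convex functions $\mathcal{H}\to\left]-\infty,+\infty\right]$. *)

theory Defs
  imports "HOL-Analysis.Analysis" "HOL-Algebra.Group_Action"
begin

definition lin_isometry :: "('a::real_normed_vector \<Rightarrow> 'b::real_normed_vector) \<Rightarrow> bool" where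
  "lin_isometry L \<longleftrightarrow> linear L \<and> (\<forall>x. norm (L x) = norm x)"

definition S_invariant :: "('g, 'm) monoid_scheme \<Rightarrow> ('g \<Rightarrow> 'x \<Rightarrow> 'x) \<Rightarrow> ('x \<Rightarrow> 'c) \<Rightarrow> bool" where
  "S_invariant G act f \<longleftrightarrow> (\<forall>s\<in>carrier G. \<forall>x. f (act s x) = f x)"

definition spectral_decomposition_system ::
  "('g, 'm) monoid_scheme \<Rightarrow> ('g \<Rightarrow> 'x::euclidean_space \<Rightarrow> 'x) \<Rightarrow> ('h::euclidean_space \<Rightarrow> 'x)
    \<Rightarrow> 'a set \<Rightarrow> ('a \<Rightarrow> 'x \<Rightarrow> 'h) \<Rightarrow> bool" where
  "spectral_decomposition_system G act \<gamma> A \<Lambda> \<longleftrightarrow>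
     group G \<and> group_action G UNIV act \<and> (\<forall>s\<in>carrier G. lin_isometry (act s)) \<and>
     (\<forall>a\<in>A. lin_isometry (\<Lambda> a)) \<and>
     (\<exists>\<tau>. S_invariant G act \<tau> \<and> (\<forall>x. \<tau> x \<in> orbit G act x) \<and> (\<forall>a\<in>A. \<gamma> \<circ> \<Lambda> a = \<tau>)) \<and>
     (\<forall>X. \<exists>a\<in>A. X = \<Lambda> a (\<gamma> X)) \<and>
     (\<forall>X Y. X \<bullet> Y \<le> \<gamma> X \<bullet> \<gamma> Y)"

definition econvex :: "('v::real_vector \<Rightarrow> ereal) \<Rightarrow> bool" where
  "econvex f \<longleftrightarrow> (\<forall>x y \<alpha>. f x < \<infinity> \<longrightarrow> f y < \<infinity> \<longrightarrow> 0 < \<alpha> \<longrightarrow> \<alpha> < 1 \<longrightarrow>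
      f (\<alpha> *\<^sub>R x + (1 - \<alpha>) *\<^sub>R y) \<le> ereal \<alpha> * f x + ereal (1 - \<alpha>) * f y)"

definition eproper :: "('v \<Rightarrow> ereal) \<Rightarrow> bool" where
  "eproper f \<longleftrightarrow> (\<forall>x. f x \<noteq> -\<infinity>) \<and> (\<exists>x. f x < \<infinity>)"

definition elsc :: "('v::topological_space \<Rightarrow> ereal) \<Rightarrow> bool" where
  "elsc f \<longleftrightarrow> (\<forall>x. f x \<le> Liminf (at x) f)"

definition Gamma0 :: "('v::real_normed_vector \<Rightarrow> ereal) \<Rightarrow> bool" where
  "Gamma0 f \<longleftrightarrow> eproper f \<and> elsc f \<and> econvex f"

end

theory Submission
  imports Defs
begin

lemma lin_iso_inner:
  assumes "lin_isometry L"
  shows "L x \<bullet> L y = x \<bullet> y"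
proof -
  have lin: "linear L" and n: "\<And>v. norm (L v) = norm v"
    using assms unfolding lin_isometry_def by auto
  have sq: "L v \<bullet> L v = v \<bullet> v" for v
    using n[of v] by (simp add: dot_square_norm)
  have "L (x + y) \<bullet> L (x + y) = (x + y) \<bullet> (x + y)" by (rule sq)
  hence "(L x + L y) \<bullet> (L x + L y) = (x + y) \<bullet> (x + y)"
    using lin by (simp add: real_vector.linear_add)
  hence "L x \<bullet> L x + 2 * (L x \<bullet> L y) + L y \<bullet> L y = x \<bullet> x + 2 * (x \<bullet> y) + y \<bullet> y"
    by (simp add: inner_add_left inner_add_right inner_commute)
  thus ?thesis using sq[of x] sq[of y] by simp
qed

lemma elsc_comp:
  fixes f :: "'b::real_normed_vector \<Rightarrow> ereal" and g :: "'a::real_normed_vector \<Rightarrow> 'b"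
  assumes "elsc f" and "continuous_on UNIV g"
  shows "elsc (f \<circ> g)"
  unfolding elsc_def
proof
  fix x
  show "(f \<circ> g) x \<le> Liminf (at x) (f \<circ> g)"
    unfolding le_Liminf_iff
  proof (intro allI impI)
    fix c assume c: "c < (f \<circ> g) x"
    have "eventually (\<lambda>y. c < f y) (at (g x))"
      using assms(1) c unfolding elsc_def le_Liminf_iff by auto
    hence "eventually (\<lambda>y. y \<noteq> g x \<longrightarrow> y \<in> UNIV \<longrightarrow> c < f y) (nhds (g x))"
      by (simp add: eventually_at_filter)
    hence ev: "eventually (\<lambda>y. c < f y) (nhds (g x))"
      by (rule eventually_mono) (use c in auto)
    have "isCont g x" using assms(2) by (simp add: continuous_on_eq_continuous_at)
    hence "filterlim g (nhds (g x)) (at x)" by (simp add: isCont_def)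
    thus "eventually (\<lambda>y. c < (f \<circ> g) y) (at x)"
      using ev unfolding filterlim_iff comp_def by blast
  qed
qed

theorem theorem4p6:
  fixes G :: "('g, 'm) monoid_scheme"
    and act :: "'g \<Rightarrow> 'x::euclidean_space \<Rightarrow> 'x"
    and \<gamma> :: "'h::euclidean_space \<Rightarrow> 'x"
    and A :: "'a set"
    and \<Lambda> :: "'a \<Rightarrow> 'x \<Rightarrow> 'h"
    and \<phi> :: "'x \<Rightarrow> ereal"
  assumes "spectral_decomposition_system G act \<gamma> A \<Lambda>"
    and "\<forall>x. \<phi> x \<noteq> -\<infinity>"
    and "S_invariant G act \<phi>"
  shows "(econvex (\<phi> \<circ> \<gamma>) \<longleftrightarrow> econvex \<phi>) \<and>
         (eproper \<phi> \<longrightarrow> (Gamma0 (\<phi> \<circ> \<gamma>) \<longleftrightarrow> Gamma0 \<phi>))"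
proof -
  have grp: "group G" and ga: "group_action G UNIV act"
    and actiso: "\<forall>s\<in>carrier G. lin_isometry (act s)"
    and Liso: "\<forall>a\<in>A. lin_isometry (\<Lambda> a)"
    and tau: "\<exists>\<tau>. S_invariant G act \<tau> \<and> (\<forall>x. \<tau> x \<in> orbit G act x) \<and> (\<forall>a\<in>A. \<gamma> \<circ> \<Lambda> a = \<tau>)"
    and C: "\<forall>X. \<exists>a\<in>A. X = \<Lambda> a (\<gamma> X)"
    and D: "\<forall>X Y. X \<bullet> Y \<le> \<gamma> X \<bullet> \<gamma> Y"
    using assms(1) unfolding spectral_decomposition_system_def by blast+
  obtain \<tau> where tinv: "S_invariant G act \<tau>" and torb: "\<forall>x. \<tau> x \<in> orbit G act x"
    and tg: "\<forall>a\<in>A. \<gamma> \<circ> \<Lambda> a = \<tau>" using tau by blast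
  obtain a0 where a0: "a0 \<in> A" using C by blast
  have phiinv: "\<phi> (act s x) = \<phi> x" if "s \<in> carrier G" for s x
    using assms(3) that unfolding S_invariant_def by blast
  have tauinv: "\<tau> (act s x) = \<tau> x" if "s \<in> carrier G" for s x
    using tinv that unfolding S_invariant_def by blast
  have phitau: "\<phi> (\<tau> x) = \<phi> x" for x
    using torb[rule_format, of x] phiinv unfolding orbit_def by auto
  have gL: "\<gamma> (\<Lambda> a x) = \<tau> x" if "a \<in> A" for a x
    using tg that by (metis comp_apply)
  have phi_eq: "\<phi> x = \<phi> (\<gamma> (\<Lambda> a x))" if "a \<in> A" for x a
    using gL[OF that] phitau by simp
  have phi_eq': "\<phi> (\<gamma> (\<Lambda> a x)) = \<phi> x" if "a \<in> A" for x a
    using phi_eq[OF that] by simp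
  have gfix: "\<tau> (\<gamma> X) = \<gamma> X" for X
  proof -
    obtain a where "a \<in> A" "X = \<Lambda> a (\<gamma> X)" using C by blast
    thus ?thesis using gL by metis
  qed
  have Llin: "linear (\<Lambda> a)" if "a \<in> A" for a
    using Liso that unfolding lin_isometry_def by blast
  have Linner: "\<Lambda> a x \<bullet> \<Lambda> a y = x \<bullet> y" if "a \<in> A" for a x y
    using Liso that lin_iso_inner by blast
  have tD: "x \<bullet> y \<le> \<tau> x \<bullet> \<tau> y" for x y
    using D[rule_format, of "\<Lambda> a0 x" "\<Lambda> a0 y"] Linner[OF a0] gL[OF a0] by simp
  have actinner: "act s x \<bullet> act s y = x \<bullet> y" if "s \<in> carrier G" for s x y
    using actiso that lin_iso_inner by blast
  have actnorm: "norm (act s x) = norm x" if "s \<in> carrier G" for s x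
    using actiso that unfolding lin_isometry_def by blast
  have actinv: "act (inv\<^bsub>G\<^esub> s) (act s y) = y" if "s \<in> carrier G" for s y
    using group_action.orbit_sym_aux[OF ga that] by blast
  have invc: "inv\<^bsub>G\<^esub> s \<in> carrier G" if "s \<in> carrier G" for s
    using grp that by (simp add: group.inv_closed)
  have gnorm: "norm (\<gamma> X) = norm X" for X
  proof -
    obtain a where "a \<in> A" "X = \<Lambda> a (\<gamma> X)" using C by blast
    thus ?thesis using Liso unfolding lin_isometry_def by metis
  qed
  have glip: "norm (\<gamma> X - \<gamma> Y) \<le> norm (X - Y)" for X Y
  proof -
    have "(norm (\<gamma> X - \<gamma> Y))\<^sup>2 = (norm (\<gamma> X))\<^sup>2 - 2 * (\<gamma> X \<bullet> \<gamma> Y) + (norm (\<gamma> Y))\<^sup>2"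
      by (simp add: power2_norm_eq_inner inner_diff_left inner_diff_right inner_commute)
    also have "\<dots> \<le> (norm X)\<^sup>2 - 2 * (X \<bullet> Y) + (norm Y)\<^sup>2"
      using gnorm[of X] gnorm[of Y] D by simp
    also have "\<dots> = (norm (X - Y))\<^sup>2"
      by (simp add: power2_norm_eq_inner inner_diff_left inner_diff_right inner_commute)
    finally show ?thesis by (rule power2_le_imp_le) simp
  qed
  have gcont: "continuous_on UNIV \<gamma>"
    unfolding continuous_on_iff
  proof (intro ballI allI impI)
    fix x :: 'h and e :: real assume e: "0 < e"
    have "\<forall>x'. norm (x' - x) < e \<longrightarrow> norm (\<gamma> x' - \<gamma> x) < e"
      using glip le_less_trans by blast
    thus "\<exists>d>0. \<forall>x'\<in>UNIV. dist x' x < d \<longrightarrow> dist (\<gamma> x') (\<gamma> x) < e"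
      using e unfolding dist_norm by blast
  qed
  have adjinv: "adjoint (\<Lambda> a) (\<Lambda> a w) = w" if "a \<in> A" for a w
  proof -
    have "v \<bullet> (adjoint (\<Lambda> a) (\<Lambda> a w) - w) = 0" for v
      using adjoint_works[OF Llin[OF that], of v "\<Lambda> a w"] Linner[OF that]
      by (simp add: inner_diff_right)
    from this[of "adjoint (\<Lambda> a) (\<Lambda> a w) - w"] show ?thesis by simp
  qed
  have key: "\<phi> (adjoint (\<Lambda> a) X) \<le> \<phi> (\<gamma> X)" if cvx: "econvex \<phi>" and aA: "a \<in> A" for a X
  proof -
    define Orb where "Orb = orbit G act (\<gamma> X)"
    define u where "u = adjoint (\<Lambda> a) X"
    have Oel: "z \<in> Orb \<longleftrightarrow> (\<exists>s\<in>carrier G. z = act s (\<gamma> X))" for z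
      unfolding Orb_def orbit_def by auto
    have maxO: "\<exists>z0\<in>Orb. (\<forall>z\<in>Orb. z \<bullet> y \<le> z0 \<bullet> y) \<and> u \<bullet> y \<le> z0 \<bullet> y" for y
    proof -
      obtain t where t: "t \<in> carrier G" "\<tau> y = act t y"
        using torb[rule_format, of y] unfolding orbit_def by auto
      define z0 where "z0 = act (inv\<^bsub>G\<^esub> t) (\<gamma> X)"
      have z0O: "z0 \<in> Orb" using Oel invc[OF t(1)] z0_def by blast
      have z0y: "z0 \<bullet> y = \<gamma> X \<bullet> \<tau> y"
        using actinner[OF invc[OF t(1)], of "\<gamma> X" "act t y"] actinv[OF t(1), of y] t(2) z0_def
        by simp
      have "z \<bullet> y \<le> z0 \<bullet> y" if "z \<in> Orb" for z
      proof -
        from that have "\<exists>s\<in>carrier G. z = act s (\<gamma> X)" by (simp only: Oel)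
        then obtain s where s: "s \<in> carrier G" "z = act s (\<gamma> X)" by blast
        have "z \<bullet> y \<le> \<tau> z \<bullet> \<tau> y" by (rule tD)
        also have "\<tau> z = \<gamma> X" using s tauinv gfix by simp
        finally show ?thesis using z0y by simp
      qed
      moreover have "u \<bullet> y \<le> z0 \<bullet> y"
      proof -
        have "u \<bullet> y = \<Lambda> a y \<bullet> X"
          using adjoint_works[OF Llin[OF aA], of y X] u_def by (simp add: inner_commute)
        also have "\<dots> \<le> \<gamma> (\<Lambda> a y) \<bullet> \<gamma> X" using D by blast
        also have "\<dots> = \<gamma> X \<bullet> \<tau> y" using gL[OF aA] by (simp add: inner_commute)
        finally show ?thesis using z0y by simp
      qed
      ultimately show ?thesis using z0O by blast
    qed
    have Onorm: "norm z = norm (\<gamma> X)" if "z \<in> Orb" for z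
      using Oel that actnorm by auto
    have bO: "bounded Orb"
      unfolding bounded_iff using Onorm by (intro exI[of _ "norm (\<gamma> X)"]) simp
    have cO: "closed Orb"
    proof -
      have "closure Orb \<subseteq> Orb"
      proof
        fix p assume p: "p \<in> closure Orb"
        obtain z0 where z0: "z0 \<in> Orb" "\<forall>z\<in>Orb. z \<bullet> p \<le> z0 \<bullet> p" using maxO by blast
        have "Orb \<subseteq> {z. z \<bullet> p \<le> z0 \<bullet> p} \<inter> {z. norm z = norm (\<gamma> X)}"
          using z0 Onorm by auto
        moreover have "closed ({z. z \<bullet> p \<le> z0 \<bullet> p} \<inter> {z. norm z = norm (\<gamma> X)})"
          by (intro closed_Int closed_Collect_le closed_Collect_eq continuous_intros)
        ultimately have "p \<in> {z. z \<bullet> p \<le> z0 \<bullet> p} \<inter> {z. norm z = norm (\<gamma> X)}"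
          using p closure_minimal by blast
        hence pp: "p \<bullet> p \<le> z0 \<bullet> p" and np: "norm p = norm (\<gamma> X)" by auto
        have nz: "norm z0 = norm (\<gamma> X)" using Onorm z0(1) by blast
        have "(norm (p - z0))\<^sup>2 = (norm p)\<^sup>2 - 2 * (z0 \<bullet> p) + (norm z0)\<^sup>2"
          by (simp add: power2_norm_eq_inner inner_diff_left inner_diff_right inner_commute)
        also have "\<dots> \<le> 0"
        proof -
          have "(norm p)\<^sup>2 = p \<bullet> p" by (simp add: power2_norm_eq_inner)
          moreover have "(norm z0)\<^sup>2 = (norm p)\<^sup>2" using np nz by simp
          ultimately show ?thesis using pp by (simp add: inner_commute)
        qed
        finally have "p = z0" by simp
        thus "p \<in> Orb" using z0 by simp
      qed
      thus ?thesis using closure_subset_eq by blast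
    qed
    have "compact (convex hull Orb)"
      using bO cO compact_convex_hull compact_eq_bounded_closed by blast
    hence chc: "closed (convex hull Orb)" by (rule compact_imp_closed)
    have uin: "u \<in> convex hull Orb"
    proof (rule ccontr)
      assume "u \<notin> convex hull Orb"
      then obtain a' b where ab: "a' \<bullet> u < b" "\<forall>x\<in>convex hull Orb. b < a' \<bullet> x"
        using separating_hyperplane_closed_point[OF convex_convex_hull chc] by blast
      obtain z0 where z0: "z0 \<in> Orb" "u \<bullet> (-a') \<le> z0 \<bullet> (-a')" using maxO by blast
      have "z0 \<in> convex hull Orb" using z0(1) by (rule hull_inc)
      hence "b < a' \<bullet> z0" using ab(2) by blast
      thus False using ab(1) z0(2) by (simp add: inner_commute)
    qed
    show ?thesis
    proof (cases "\<phi> (\<gamma> X) = \<infinity>")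
      case True thus ?thesis by simp
    next
      case False
      define c where "c = \<phi> (\<gamma> X)"
      have c1: "c \<noteq> \<infinity>" and c2: "c \<noteq> -\<infinity>" using False assms(2) c_def by auto
      obtain r where cr: "c = ereal r" using c1 c2 by (cases c) auto
      have convL: "convex {x. \<phi> x \<le> c}"
      proof (rule convexI)
        fix x y and p q :: real
        assume x: "x \<in> {x. \<phi> x \<le> c}" and y: "y \<in> {x. \<phi> x \<le> c}" and pq0: "0 \<le> p" "0 \<le> q" "p + q = 1"
        hence pq: "0 \<le> p \<and> 0 \<le> q \<and> p + q = 1" by simp
        show "p *\<^sub>R x + q *\<^sub>R y \<in> {x. \<phi> x \<le> c}"
        proof (cases "p = 0 \<or> q = 0")
          case True thus ?thesis using x y pq by auto
        next
          case False
          hence p: "0 < p" "p < 1" and q: "q = 1 - p" using pq by auto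
          have fx: "\<phi> x < \<infinity>" and fy: "\<phi> y < \<infinity>" using x y cr by auto
          have "\<phi> (p *\<^sub>R x + (1 - p) *\<^sub>R y) \<le> ereal p * \<phi> x + ereal (1 - p) * \<phi> y"
            using cvx fx fy p unfolding econvex_def by blast
          also have "\<dots> \<le> ereal p * c + ereal (1 - p) * c"
            using x y p by (intro add_mono ereal_mult_left_mono) auto
          also have "\<dots> = c" using cr by (simp add: algebra_simps)
          finally show ?thesis using q by simp
        qed
      qed
      have "Orb \<subseteq> {x. \<phi> x \<le> c}" using Oel phiinv c_def by auto
      hence "convex hull Orb \<subseteq> {x. \<phi> x \<le> c}" using convL by (rule hull_minimal)
      thus ?thesis using uin u_def c_def by auto
    qed
  qed
  have part1: "econvex (\<phi> \<circ> \<gamma>) \<longleftrightarrow> econvex \<phi>"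
  proof
    assume cv: "econvex (\<phi> \<circ> \<gamma>)"
    show "econvex \<phi>"
      unfolding econvex_def
    proof (intro allI impI)
      fix x y and \<alpha> :: real
      assume fx: "\<phi> x < \<infinity>" and fy: "\<phi> y < \<infinity>" and al: "0 < \<alpha>" "\<alpha> < 1"
      have l: "\<Lambda> a0 (\<alpha> *\<^sub>R x + (1 - \<alpha>) *\<^sub>R y) = \<alpha> *\<^sub>R \<Lambda> a0 x + (1 - \<alpha>) *\<^sub>R \<Lambda> a0 y"
        using Llin[OF a0] by (simp add: real_vector.linear_add linear_cmul)
      have "\<phi> (\<alpha> *\<^sub>R x + (1 - \<alpha>) *\<^sub>R y) = (\<phi> \<circ> \<gamma>) (\<alpha> *\<^sub>R \<Lambda> a0 x + (1 - \<alpha>) *\<^sub>R \<Lambda> a0 y)"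
        using phi_eq'[OF a0, of "\<alpha> *\<^sub>R x + (1 - \<alpha>) *\<^sub>R y"] l by (simp only: comp_apply)
      also have "\<dots> \<le> ereal \<alpha> * (\<phi> \<circ> \<gamma>) (\<Lambda> a0 x) + ereal (1 - \<alpha>) * (\<phi> \<circ> \<gamma>) (\<Lambda> a0 y)"
        using cv[unfolded econvex_def, rule_format, of "\<Lambda> a0 x" "\<Lambda> a0 y" \<alpha>] fx fy al phi_eq'[OF a0]
        by simp
      also have "\<dots> = ereal \<alpha> * \<phi> x + ereal (1 - \<alpha>) * \<phi> y"
        using phi_eq'[OF a0] by simp
      finally show "\<phi> (\<alpha> *\<^sub>R x + (1 - \<alpha>) *\<^sub>R y) \<le> ereal \<alpha> * \<phi> x + ereal (1 - \<alpha>) * \<phi> y" .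
    qed
  next
    assume cv: "econvex \<phi>"
    show "econvex (\<phi> \<circ> \<gamma>)"
      unfolding econvex_def
    proof (intro allI impI)
      fix X Y and \<alpha> :: real
      assume fx: "(\<phi> \<circ> \<gamma>) X < \<infinity>" and fy: "(\<phi> \<circ> \<gamma>) Y < \<infinity>" and al: "0 < \<alpha>" "\<alpha> < 1"
      define Z where "Z = \<alpha> *\<^sub>R X + (1 - \<alpha>) *\<^sub>R Y"
      obtain a where aA: "a \<in> A" and Za: "Z = \<Lambda> a (\<gamma> Z)" using C by blast
      let ?d = "adjoint (\<Lambda> a)"
      have ld: "linear ?d" using adjoint_linear Llin[OF aA] by blast
      have gZ: "\<gamma> Z = \<alpha> *\<^sub>R ?d X + (1 - \<alpha>) *\<^sub>R ?d Y"
      proof -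
        have "\<gamma> Z = ?d Z" using adjinv[OF aA, of "\<gamma> Z"] Za by simp
        also have "\<dots> = \<alpha> *\<^sub>R ?d X + (1 - \<alpha>) *\<^sub>R ?d Y"
          using ld unfolding Z_def by (simp add: real_vector.linear_add linear_cmul)
        finally show ?thesis .
      qed
      have kX: "\<phi> (?d X) \<le> \<phi> (\<gamma> X)" and kY: "\<phi> (?d Y) \<le> \<phi> (\<gamma> Y)"
        using key[OF cv aA] by auto
      have "(\<phi> \<circ> \<gamma>) Z = \<phi> (\<alpha> *\<^sub>R ?d X + (1 - \<alpha>) *\<^sub>R ?d Y)" using gZ by simp
      also have "\<dots> \<le> ereal \<alpha> * \<phi> (?d X) + ereal (1 - \<alpha>) * \<phi> (?d Y)"
      proof -
        have "\<phi> (?d X) < \<infinity>" using kX fx by (metis comp_apply le_less_trans)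
        moreover have "\<phi> (?d Y) < \<infinity>" using kY fy by (metis comp_apply le_less_trans)
        ultimately show ?thesis
          using cv[unfolded econvex_def, rule_format, of "?d X" "?d Y" \<alpha>] al by blast
      qed
      also have "\<dots> \<le> ereal \<alpha> * \<phi> (\<gamma> X) + ereal (1 - \<alpha>) * \<phi> (\<gamma> Y)"
        using kX kY al by (intro add_mono ereal_mult_left_mono) auto
      finally show "(\<phi> \<circ> \<gamma>) (\<alpha> *\<^sub>R X + (1 - \<alpha>) *\<^sub>R Y) \<le> ereal \<alpha> * (\<phi> \<circ> \<gamma>) X + ereal (1 - \<alpha>) * (\<phi> \<circ> \<gamma>) Y"
        unfolding Z_def by simp
    qed
  qed
  have part2: "Gamma0 (\<phi> \<circ> \<gamma>) \<longleftrightarrow> Gamma0 \<phi>" if pr: "eproper \<phi>"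
  proof -
    have pr2: "eproper (\<phi> \<circ> \<gamma>)"
    proof -
      obtain x where "\<phi> x < \<infinity>" using pr unfolding eproper_def by blast
      hence "(\<phi> \<circ> \<gamma>) (\<Lambda> a0 x) < \<infinity>" using phi_eq'[OF a0] by simp
      thus ?thesis using assms(2) unfolding eproper_def by auto
    qed
    have "elsc (\<phi> \<circ> \<gamma>) \<longleftrightarrow> elsc \<phi>"
    proof
      assume "elsc (\<phi> \<circ> \<gamma>)"
      moreover have "continuous_on UNIV (\<Lambda> a0)"
        using Llin[OF a0] by (simp add: linear_continuous_on linear_conv_bounded_linear)
      ultimately have "elsc ((\<phi> \<circ> \<gamma>) \<circ> \<Lambda> a0)" by (rule elsc_comp)
      moreover have "(\<phi> \<circ> \<gamma>) \<circ> \<Lambda> a0 = \<phi>" using phi_eq'[OF a0] by (simp add: fun_eq_iff)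
      ultimately show "elsc \<phi>" by simp
    next
      assume "elsc \<phi>"
      thus "elsc (\<phi> \<circ> \<gamma>)" using gcont by (rule elsc_comp)
    qed
    thus ?thesis using pr pr2 part1 unfolding Gamma0_def by blast
  qed
  show ?thesis using part1 part2 by blast
qed

end
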